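(* For $r\ge2$, let $H(r)$ be the graph constructed from two disjoint copies of $K_{r+2}$ by adding a matching of $r$ edges, each joining a vertex of the first copy to a vertex of the second copy. Then $\mathrm{Z}_-(H(r))=r$, $\overline{\mathrm{Z}}_-(H(r))=r+1$, and $z^-_0(H(r))=2r=\overline{\mathrm{Z}}_-(H(r))+r-1$.
   Context: All graphs are finite, simple, undirected. Skew color change rule: with $W$ the set of white (non-blue) vertices, any vertex $u$ (blue or white) may color a white vertex $w$ blue if $N(u)\cap W=\{w\}$. $S$ is a skew forcing set if starting with exactly $S$ blue and applying the rule repeatedly, all vertices become blue. $\mathrm{Z}_-(G)$ is the minimum cardinality of a skew forcing set and $\overline{\mathrm{Z}}_-(G)$ the maximum cardinality of an inclusion-minimal skew forcing set. $\mathfrak{Z}^-(G)$ has as vertices the skew forcing sets, with $S_1S_2$ an edge iff $|S_1\ominus S_2|=1$; $\mathfrak{Z}^-_k(G)$ is its subgraph induced by skew forcing sets of size at most $k$. $z^-_0(G)$ is the least $k_0$ such that $\mathfrak{Z}^-_k(G)$ is connected for all $k\ge k_0$. *)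

theory Defs
  imports Main
begin

text \<open>A finite simple graph is given by a vertex set V and a symmetric irreflexive
  adjacency relation E (only its restriction to V matters).\<close>

definition nbhd :: "'a set \<Rightarrow> ('a \<Rightarrow> 'a \<Rightarrow> bool) \<Rightarrow> 'a \<Rightarrow> 'a set" where
  "nbhd V E u = {x \<in> V. E u x}"

text \<open>One application of the skew color change rule: with white set W = V - B,
  any vertex u (blue or white) with N(u) \<inter> W = {w} colors w blue.\<close>
definition skew_step :: "'a set \<Rightarrow> ('a \<Rightarrow> 'a \<Rightarrow> bool) \<Rightarrow> 'a set \<Rightarrow> 'a set \<Rightarrow> bool" where
  "skew_step V E B B' \<longleftrightarrow>
     (\<exists>u\<in>V. \<exists>w\<in>V - B. nbhd V E u \<inter> (V - B) = {w} \<and> B' = insert w B)"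

definition skew_forcing_set :: "'a set \<Rightarrow> ('a \<Rightarrow> 'a \<Rightarrow> bool) \<Rightarrow> 'a set \<Rightarrow> bool" where
  "skew_forcing_set V E S \<longleftrightarrow> S \<subseteq> V \<and> (skew_step V E)\<^sup>*\<^sup>* S V"

definition minimal_skew_forcing_set :: "'a set \<Rightarrow> ('a \<Rightarrow> 'a \<Rightarrow> bool) \<Rightarrow> 'a set \<Rightarrow> bool" where
  "minimal_skew_forcing_set V E S \<longleftrightarrow>
     skew_forcing_set V E S \<and> (\<forall>T. T \<subset> S \<longrightarrow> \<not> skew_forcing_set V E T)"

definition Z_minus :: "'a set \<Rightarrow> ('a \<Rightarrow> 'a \<Rightarrow> bool) \<Rightarrow> nat" where
  "Z_minus V E = Min (card ` {S. skew_forcing_set V E S})"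

definition Z_minus_bar :: "'a set \<Rightarrow> ('a \<Rightarrow> 'a \<Rightarrow> bool) \<Rightarrow> nat" where
  "Z_minus_bar V E = Max (card ` {S. minimal_skew_forcing_set V E S})"

definition sym_diff :: "'a set \<Rightarrow> 'a set \<Rightarrow> 'a set" where
  "sym_diff A B = (A - B) \<union> (B - A)"

definition skew_TAR_vertices :: "'a set \<Rightarrow> ('a \<Rightarrow> 'a \<Rightarrow> bool) \<Rightarrow> nat \<Rightarrow> 'a set set" where
  "skew_TAR_vertices V E k = {S. skew_forcing_set V E S \<and> card S \<le> k}"

definition skew_TAR_adj :: "'a set \<Rightarrow> ('a \<Rightarrow> 'a \<Rightarrow> bool) \<Rightarrow> nat \<Rightarrow> 'a set \<Rightarrow> 'a set \<Rightarrow> bool" where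
  "skew_TAR_adj V E k S1 S2 \<longleftrightarrow>
     S1 \<in> skew_TAR_vertices V E k \<and> S2 \<in> skew_TAR_vertices V E k \<and> card (sym_diff S1 S2) = 1"

definition skew_TAR_connected :: "'a set \<Rightarrow> ('a \<Rightarrow> 'a \<Rightarrow> bool) \<Rightarrow> nat \<Rightarrow> bool" where
  "skew_TAR_connected V E k \<longleftrightarrow>
     (\<forall>S1\<in>skew_TAR_vertices V E k. \<forall>S2\<in>skew_TAR_vertices V E k. (skew_TAR_adj V E k)\<^sup>*\<^sup>* S1 S2)"

definition z_minus_0 :: "'a set \<Rightarrow> ('a \<Rightarrow> 'a \<Rightarrow> bool) \<Rightarrow> nat" where
  "z_minus_0 V E = (LEAST k0. \<forall>k\<ge>k0. skew_TAR_connected V E k)"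

text \<open>H(r): two copies {0} \<times> {0..r+1} and {1} \<times> {0..r+1} of K_{r+2}, plus the
  matching (0,a)--(1,a) for a < r.\<close>
definition H_vertices :: "nat \<Rightarrow> (nat \<times> nat) set" where
  "H_vertices r = {0, 1} \<times> {0..r+1}"

definition H_edge :: "nat \<Rightarrow> nat \<times> nat \<Rightarrow> nat \<times> nat \<Rightarrow> bool" where
  "H_edge r x y \<longleftrightarrow>
     (fst x = fst y \<and> snd x \<noteq> snd y) \<or> (fst x \<noteq> fst y \<and> snd x = snd y \<and> snd x < r)"

end

theory Submission
  imports Defs
begin

definition Side :: "nat \<Rightarrow> nat \<Rightarrow> (nat \<times> nat) set" where
  "Side r i = {i} \<times> {0..r+1}"

definition condi :: "nat \<Rightarrow> (nat \<times> nat) set \<Rightarrow> nat \<Rightarrow> bool" where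
  "condi r S i \<longleftrightarrow> card (Side r i - S) \<le> 1 \<or>
     (card (Side r i - S) = 2 \<and> (\<exists>x\<in>Side r i - S. r \<le> snd x \<or> (1 - i, snd x) \<in> S))"

definition cond :: "nat \<Rightarrow> (nat \<times> nat) set \<Rightarrow> bool" where
  "cond r S \<longleftrightarrow> condi r S 0 \<or> condi r S 1"

abbreviation "VV r \<equiv> H_vertices r"
abbreviation "EE r \<equiv> H_edge r"

lemma V_eq: "H_vertices r = Side r 0 \<union> Side r 1"
  unfolding H_vertices_def Side_def by auto

lemma finite_Side[simp]: "finite (Side r i)" unfolding Side_def by auto
lemma card_Side[simp]: "card (Side r i) = r + 2" unfolding Side_def by (simp add: card_cartesian_product)
lemma Side_disj: "Side r 0 \<inter> Side r 1 = {}" unfolding Side_def by auto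
lemma finite_V[simp]: "finite (H_vertices r)" unfolding V_eq by simp
lemma card_V: "card (H_vertices r) = 2*r+4"
  unfolding V_eq using Side_disj by (simp add: card_Un_disjoint)
lemma Side_sub: "i \<le> 1 \<Longrightarrow> Side r i \<subseteq> H_vertices r"
  unfolding V_eq by (cases i) auto
lemma mem_Side: "x \<in> Side r i \<longleftrightarrow> fst x = i \<and> snd x \<le> r+1"
  unfolding Side_def by (cases x) auto

lemma card_W: "card (H_vertices r - S) = card (Side r 0 - S) + card (Side r 1 - S)"
proof -
  have "H_vertices r - S = (Side r 0 - S) \<union> (Side r 1 - S)" unfolding V_eq by auto
  moreover have "(Side r 0 - S) \<inter> (Side r 1 - S) = {}" using Side_disj by auto
  ultimately show ?thesis by (simp add: card_Un_disjoint)
qed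

lemma nbW:
  assumes "i \<le> 1" "a \<le> r+1"
  shows "nbhd (H_vertices r) (H_edge r) (i,a) \<inter> (H_vertices r - S)
     = (Side r i - S - {(i,a)}) \<union> (if a < r \<and> (1-i,a) \<notin> S then {(1-i,a)} else {})"
proof -
  have "i = 0 \<or> i = 1" using assms by auto
  then show ?thesis using assms unfolding nbhd_def H_vertices_def H_edge_def Side_def by auto
qed

lemma card_le2: "card {u, w} \<le> 2" by (cases "u = w") auto

lemma no_step:
  assumes nc: "\<not> cond r S"
  shows "\<not> skew_step (H_vertices r) (H_edge r) S S'"
proof
  assume "skew_step (H_vertices r) (H_edge r) S S'"
  then obtain u w where u: "u \<in> H_vertices r" and w: "w \<in> H_vertices r - S"
    and eq: "nbhd (H_vertices r) (H_edge r) u \<inter> (H_vertices r - S) = {w}"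
    unfolding skew_step_def by blast
  obtain i a where ua: "u = (i,a)" and i: "i \<le> 1" and a: "a \<le> r+1"
    using u unfolding H_vertices_def by auto
  have nci: "\<not> condi r S i" using nc i unfolding cond_def
    by (metis le_antisym less_one not_le)
  note nb = eq[unfolded ua nbW[OF i a]]
  have sub: "Side r i - S \<subseteq> {u, w}"
  proof
    fix y assume y: "y \<in> Side r i - S"
    show "y \<in> {u,w}"
    proof (cases "y = u")
      case False
      then have "y \<in> Side r i - S - {(i,a)}" using y ua by auto
      then show ?thesis using nb by auto
    qed simp
  qed
  have "card (Side r i - S) \<le> 2" using card_mono[OF _ sub] card_le2[of u w] by simp
  with nci have c2: "card (Side r i - S) = 2"
    unfolding condi_def by auto
  have allx: "\<forall>x\<in>Side r i - S. snd x < r \<and> (1 - i, snd x) \<notin> S"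
    using nci c2 unfolding condi_def by (auto simp: not_le)
  show False
  proof (cases "u \<in> S")
    case True
    have "Side r i - S \<subseteq> {w}" using sub True by auto
    then have "card (Side r i - S) \<le> 1" using card_mono[of "{w}"] by fastforce
    then show False using c2 by simp
  next
    case False
    then have uS: "u \<in> Side r i - S" using ua a unfolding Side_def by auto
    then have "a < r \<and> (1 - i, a) \<notin> S" using allx ua by (metis snd_conv)
    then have pw: "(1-i, a) = w" using nb by auto
    have "\<not> (Side r i - S \<subseteq> {u})"
    proof
      assume "Side r i - S \<subseteq> {u}"
      then have "card (Side r i - S) \<le> 1" using card_mono[of "{u}"] by fastforce
      then show False using c2 by simp
    qed
    then obtain y where y: "y \<in> Side r i - S" "y \<noteq> u" by auto
    then have "y \<in> Side r i - S - {(i,a)}" using ua by auto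
    then have "y = w" using nb by auto
    then have "fst y = 1 - i" using pw by auto
    moreover have "fst y = i" using y(1) unfolding Side_def by auto
    ultimately show False using i by arith
  qed
qed

lemma condi_mono:
  assumes "condi r S i" "S \<subseteq> S'"
  shows "condi r S' i"
proof -
  have sub: "Side r i - S' \<subseteq> Side r i - S" using assms(2) by auto
  have fin: "finite (Side r i - S)" by simp
  show ?thesis
  proof (cases "card (Side r i - S) \<le> 1")
    case True
    then show ?thesis using card_mono[OF fin sub] unfolding condi_def by simp
  next
    case False
    then obtain x where c2: "card (Side r i - S) = 2" and x: "x \<in> Side r i - S"
      and xp: "r \<le> snd x \<or> (1 - i, snd x) \<in> S"
      using assms(1) unfolding condi_def by auto
    show ?thesis
    proof (cases "x \<in> S'")
      case True
      then have "Side r i - S' \<subseteq> (Side r i - S) - {x}" using sub by auto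
      then have "card (Side r i - S') \<le> card ((Side r i - S) - {x})" by (intro card_mono) auto
      also have "\<dots> = 1" using c2 x by simp
      finally show ?thesis unfolding condi_def by simp
    next
      case False
      have le: "card (Side r i - S') \<le> 2" using card_mono[OF fin sub] c2 by simp
      have "x \<in> Side r i - S'" using x False by auto
      moreover have "r \<le> snd x \<or> (1 - i, snd x) \<in> S'" using xp assms(2) by auto
      ultimately show ?thesis using le unfolding condi_def by auto
    qed
  qed
qed

lemma cond_mono: "cond r S \<Longrightarrow> S \<subseteq> S' \<Longrightarrow> cond r S'"
  unfolding cond_def using condi_mono by blast

lemma step_intro:
  assumes "u \<in> H_vertices r" "w \<in> H_vertices r - S"
    "nbhd (H_vertices r) (H_edge r) u \<inter> (H_vertices r - S) = {w}"
  shows "skew_step (H_vertices r) (H_edge r) S (insert w S)"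
  using assms unfolding skew_step_def by blast

lemma step_side:
  assumes c: "condi r S i" and i: "i \<le> 1" and ne: "Side r i - S \<noteq> {}"
  shows "\<exists>w. w \<in> H_vertices r - S \<and> skew_step (H_vertices r) (H_edge r) S (insert w S)"
proof (cases "card (Side r i - S) \<le> 1")
  case True
  then have "card (Side r i - S) = 1" using ne by (simp add: card_gt_0_iff Suc_le_eq le_antisym)
  then obtain w where W: "Side r i - S = {w}" by (auto simp: card_Suc_eq)
  then have wS: "w \<in> Side r i" "w \<notin> S" by auto
  define b where "b = (if snd w = r then r + 1 else r)"
  have b: "b \<le> r + 1" "\<not> b < r" "(i,b) \<noteq> w" unfolding b_def by (cases w; auto)+
  have "nbhd (H_vertices r) (H_edge r) (i,b) \<inter> (H_vertices r - S) = {w}"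
    unfolding nbW[OF i b(1)] using W b by auto
  moreover have "(i,b) \<in> Side r i" using b by (simp add: Side_def)
  then have "(i,b) \<in> H_vertices r" using Side_sub[OF i] by auto
  moreover have "w \<in> H_vertices r - S" using wS Side_sub[OF i] by auto
  ultimately show ?thesis using step_intro by blast
next
  case False
  then obtain x where c2: "card (Side r i - S) = 2" and x: "x \<in> Side r i - S"
    and xp: "r \<le> snd x \<or> (1 - i, snd x) \<in> S"
    using c unfolding condi_def by auto
  obtain y where W: "Side r i - S = {x, y}" and xy: "x \<noteq> y"
    using c2 x by (metis card_2_iff doubleton_eq_iff insertE singletonD)
  have xe: "x = (i, snd x)" and xa: "snd x \<le> r + 1" using x unfolding Side_def by auto
  have "nbhd (H_vertices r) (H_edge r) (i, snd x) \<inter> (H_vertices r - S) = {y}"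
    unfolding nbW[OF i xa] using W xy xp xe by auto
  moreover have "x \<in> H_vertices r" using x Side_sub[OF i] by auto
  moreover have "y \<in> H_vertices r - S" using W Side_sub[OF i] by auto
  ultimately show ?thesis using step_intro xe by metis
qed

lemma exists_step:
  assumes c: "cond r S" and sub: "S \<subseteq> H_vertices r" and ne: "S \<noteq> H_vertices r"
  shows "\<exists>w. w \<in> H_vertices r - S \<and> skew_step (H_vertices r) (H_edge r) S (insert w S)"
proof -
  obtain i where i: "i \<le> 1" and ci: "condi r S i" using c unfolding cond_def by auto
  show ?thesis
  proof (cases "Side r i - S = {}")
    case False
    then show ?thesis using step_side[OF ci i] by blast
  next
    case True
    define j where "j = 1 - i"
    have j: "j \<le> 1" "1 - j = i" unfolding j_def using i by auto
    have VS: "H_vertices r - S = Side r j - S"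
      using True i unfolding V_eq j_def by (cases i) auto
    have nej: "Side r j - S \<noteq> {}" using VS sub ne by auto
    show ?thesis
    proof (cases "\<exists>w\<in>Side r j - S. snd w < r")
      case True
      then obtain w where w: "w \<in> Side r j - S" "snd w < r" by auto
      have we: "w = (j, snd w)" using w unfolding Side_def by auto
      have wa: "snd w \<le> r + 1" using w by simp
      have "nbhd (H_vertices r) (H_edge r) (i, snd w) \<inter> (H_vertices r - S) = {w}"
        unfolding nbW[OF i wa] using True w we j_def \<open>Side r i - S = {}\<close> by auto
      moreover have "(i, snd w) \<in> Side r i" using wa by (simp add: Side_def)
      then have "(i, snd w) \<in> H_vertices r" using Side_sub[OF i] by auto
      moreover have "w \<in> H_vertices r - S" using VS w by auto
      ultimately show ?thesis using step_intro by blast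
    next
      case False
      have subu: "Side r j - S \<subseteq> {(j,r),(j,r+1)}"
      proof
        fix x assume x: "x \<in> Side r j - S"
        then have "\<not> snd x < r" using False by blast
        then show "x \<in> {(j,r),(j,r+1)}" using x unfolding Side_def by (cases x) auto
      qed
      have le2: "card (Side r j - S) \<le> 2" using card_mono[OF _ subu] card_le2 by (meson dual_order.trans finite.emptyI finite.insertI)
      obtain x where x: "x \<in> Side r j - S" using nej by auto
      have "\<not> snd x < r" using False x by blast
      then have "r \<le> snd x" by simp
      then have "condi r S j" using le2 x unfolding condi_def by auto
      then show ?thesis using step_side[OF _ j(1) nej] by blast
    qed
  qed
qed

lemma forcing_iff:
  "skew_forcing_set (H_vertices r) (H_edge r) S \<longleftrightarrow> S \<subseteq> H_vertices r \<and> cond r S"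
proof
  assume f: "skew_forcing_set (H_vertices r) (H_edge r) S"
  then have sub: "S \<subseteq> H_vertices r" and rt: "(skew_step (H_vertices r) (H_edge r))\<^sup>*\<^sup>* S (H_vertices r)"
    unfolding skew_forcing_set_def by auto
  have "cond r S"
  proof (rule ccontr)
    assume nc: "\<not> cond r S"
    from rt show False
    proof (cases rule: converse_rtranclpE)
      case base
      then have "Side r 0 - S = {}" using Side_sub[of 0 r] by auto
      then have c0: "card (Side r 0 - S) = 0" by simp
      have "cond r S" by (simp add: cond_def condi_def c0)
      then show False using nc by simp
    next
      case (step S')
      then show False using no_step[OF nc] by blast
    qed
  qed
  then show "S \<subseteq> H_vertices r \<and> cond r S" using sub by simp
next
  assume a: "S \<subseteq> H_vertices r \<and> cond r S"
  have "\<And>S. card (H_vertices r - S) = n \<Longrightarrow> S \<subseteq> H_vertices r \<Longrightarrow> cond r S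
     \<Longrightarrow> (skew_step (H_vertices r) (H_edge r))\<^sup>*\<^sup>* S (H_vertices r)" for n
  proof (induction n rule: less_induct)
    case (less n S)
    show ?case
    proof (cases "S = H_vertices r")
      case True then show ?thesis by simp
    next
      case False
      then obtain w where w: "w \<in> H_vertices r - S"
        and st: "skew_step (H_vertices r) (H_edge r) S (insert w S)"
        using exists_step[OF less.prems(3) less.prems(2)] by blast
      have "card (H_vertices r - insert w S) < n"
        using w less.prems(1) by (metis Diff_insert card_Diff1_less finite_Diff finite_V)
      moreover have "insert w S \<subseteq> H_vertices r" using w less.prems(2) by auto
      moreover have "cond r (insert w S)" using cond_mono[OF less.prems(3)] by auto
      ultimately have "(skew_step (H_vertices r) (H_edge r))\<^sup>*\<^sup>* (insert w S) (H_vertices r)"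
        using less.IH by blast
      then show ?thesis using st by (simp add: converse_rtranclp_into_rtranclp)
    qed
  qed
  then show "skew_forcing_set (H_vertices r) (H_edge r) S"
    using a unfolding skew_forcing_set_def by blast
qed

lemma forcing_mono:
  "skew_forcing_set (H_vertices r) (H_edge r) S \<Longrightarrow> S \<subseteq> S' \<Longrightarrow> S' \<subseteq> H_vertices r
   \<Longrightarrow> skew_forcing_set (H_vertices r) (H_edge r) S'"
  using forcing_iff cond_mono by blast
lemma card_W_i: "i \<le> 1 \<Longrightarrow> card (H_vertices r - S) = card (Side r i - S) + card (Side r (1-i) - S)"
proof -
  assume "i \<le> 1"
  then have "i = 0 \<or> i = 1" by auto
  then show ?thesis
  proof
    assume "i = 0" then show ?thesis using card_W[of r S] by simp
  next
    assume "i = 1" then show ?thesis using card_W[of r S] by simp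
  qed
qed

lemma condi_le2: "condi r S i \<Longrightarrow> card (Side r i - S) \<le> 2"
  unfolding condi_def by auto

lemma card_Side_Diff_le: "card (Side r i - S) \<le> r + 2"
  using card_mono[OF finite_Side[of r i] Diff_subset[of "Side r i" S]] by simp

lemma cond_cardW: "cond r S \<Longrightarrow> card (H_vertices r - S) \<le> r + 4"
proof -
  assume "cond r S"
  then obtain i where i: "i \<le> 1" "condi r S i" unfolding cond_def by auto
  have "card (H_vertices r - S) = card (Side r i - S) + card (Side r (1-i) - S)" using card_W_i[OF i(1)] .
  moreover have "card (Side r i - S) \<le> 2" using condi_le2[OF i(2)] .
  moreover have "card (Side r (1-i) - S) \<le> r + 2" using card_Side_Diff_le .
  ultimately show ?thesis by linarith
qed

lemma card_S_V: "S \<subseteq> H_vertices r \<Longrightarrow> card S + card (H_vertices r - S) = 2*r+4"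
proof -
  assume a: "S \<subseteq> H_vertices r"
  have f: "finite S" by (rule finite_subset[OF a finite_V])
  have "card (H_vertices r - S) = card (H_vertices r) - card S" by (rule card_Diff_subset[OF f a])
  moreover have "card S \<le> card (H_vertices r)" by (rule card_mono[OF finite_V a])
  moreover have "card (H_vertices r) = 2*r+4" by (rule card_V)
  ultimately show ?thesis by linarith
qed

definition TT :: "nat \<Rightarrow> nat \<Rightarrow> (nat \<times> nat) set" where "TT r i = {i} \<times> {0..<r}"

lemma TT_props:
  assumes "i \<le> 1"
  shows "skew_forcing_set (H_vertices r) (H_edge r) (TT r i)" "card (TT r i) = r"
    "TT r i \<subseteq> Side r i" "Side r i - TT r i = {(i,r),(i,r+1)}"
proof -
  show W: "Side r i - TT r i = {(i,r),(i,r+1)}" unfolding Side_def TT_def by auto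
  show sub: "TT r i \<subseteq> Side r i" unfolding Side_def TT_def by auto
  show "card (TT r i) = r" unfolding TT_def by (simp add: card_cartesian_product)
  have "condi r (TT r i) i" unfolding condi_def W by auto
  then have "cond r (TT r i)" unfolding cond_def using assms by (cases i) auto
  then show "skew_forcing_set (H_vertices r) (H_edge r) (TT r i)"
    using forcing_iff sub Side_sub[OF assms] by blast
qed

lemma Zminus: "Z_minus (H_vertices r) (H_edge r) = r"
  unfolding Z_minus_def
proof (rule Min_eqI)
  have "{S. skew_forcing_set (H_vertices r) (H_edge r) S} \<subseteq> Pow (H_vertices r)"
    unfolding skew_forcing_set_def by auto
  then show "finite (card ` {S. skew_forcing_set (H_vertices r) (H_edge r) S})"
    by (meson finite_Pow_iff finite_V finite_imageI finite_subset)
next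
  fix y assume "y \<in> card ` {S. skew_forcing_set (H_vertices r) (H_edge r) S}"
  then obtain S where S: "skew_forcing_set (H_vertices r) (H_edge r) S" "y = card S" by auto
  then have "S \<subseteq> H_vertices r" "cond r S" using forcing_iff by auto
  then have "card (H_vertices r - S) \<le> r + 4" "card S + card (H_vertices r - S) = 2*r+4"
    using cond_cardW card_S_V by auto
  then show "r \<le> y" using S(2) by linarith
next
  show "r \<in> card ` {S. skew_forcing_set (H_vertices r) (H_edge r) S}"
  proof (rule rev_image_eqI)
    show "TT r 0 \<in> {S. skew_forcing_set (H_vertices r) (H_edge r) S}" using TT_props(1)[of 0 r] by simp
    show "r = card (TT r 0)" using TT_props(2)[of 0 r] by simp
  qed
qed

definition SX :: "nat \<Rightarrow> (nat \<times> nat) set" where "SX r = insert (1,0) ({0} \<times> {2..r+1})"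

lemma SX_min:
  assumes r: "r \<ge> 2"
  shows "minimal_skew_forcing_set (H_vertices r) (H_edge r) (SX r)" "card (SX r) = r + 1"
proof -
  have W0: "Side r 0 - SX r = {(0,0),(0,1)}" using r unfolding Side_def SX_def by auto
  have sub: "SX r \<subseteq> H_vertices r" unfolding SX_def H_vertices_def by auto
  have c0: "condi r (SX r) 0" unfolding condi_def W0 by (simp add: SX_def)
  have f: "skew_forcing_set (H_vertices r) (H_edge r) (SX r)"
    using forcing_iff sub c0 unfolding cond_def by blast
  have "(1::nat,0::nat) \<notin> {0::nat} \<times> {2..r+1}" by simp
  then show "card (SX r) = r + 1" unfolding SX_def by (simp add: card_cartesian_product)
  have "\<not> skew_forcing_set (H_vertices r) (H_edge r) T" if T: "T \<subset> SX r" for T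
  proof
    assume fT: "skew_forcing_set (H_vertices r) (H_edge r) T"
    then have cT: "cond r T" using forcing_iff by auto
    obtain v where v: "v \<in> SX r" "v \<notin> T" using T by auto
    have S1: "Side r 1 - {(1,0)} \<subseteq> Side r 1 - T" using T unfolding SX_def Side_def by auto
    have "(1,0) \<in> Side r 1" by (simp add: Side_def)
    then have "card (Side r 1 - {(1,0)}) = r + 1" by simp
    then have "card (Side r 1 - T) \<ge> r+1" using card_mono[OF _ S1] by simp
    then have n1: "\<not> condi r T 1" using r unfolding condi_def by auto
    have S0: "{(0,0),(0,1)} \<subseteq> Side r 0 - T" using T W0 by auto
    have n0: "\<not> condi r T 0"
    proof
      assume c: "condi r T 0"
      have ge2: "card (Side r 0 - T) \<ge> 2" using card_mono[OF _ S0] by simp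
      with c have c2: "card (Side r 0 - T) = 2" unfolding condi_def by auto
      with c have ex: "\<exists>x\<in>Side r 0 - T. r \<le> snd x \<or> (1, snd x) \<in> T" unfolding condi_def by auto
      have eq: "Side r 0 - T = {(0,0),(0,1)}" using card_subset_eq[OF _ S0] c2 by simp
      then have "v \<notin> Side r 0" using v W0 by auto
      then have "v = (1,0)" using v unfolding SX_def Side_def by auto
      then have "(1::nat,0::nat) \<notin> T" using v by simp
      moreover have "(1::nat,1::nat) \<notin> T" using T unfolding SX_def by auto
      ultimately show False using ex eq r by auto
    qed
    show False using cT n0 n1 unfolding cond_def by simp
  qed
  then show "minimal_skew_forcing_set (H_vertices r) (H_edge r) (SX r)"
    unfolding minimal_skew_forcing_set_def using f by auto
qed

lemma not_Side_other: "v \<in> Side r j \<Longrightarrow> i \<noteq> j \<Longrightarrow> v \<notin> Side r i"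
  unfolding Side_def by auto

lemma card_Side_Int: "card (Side r j \<inter> S) = r + 2 - card (Side r j - S)"
proof -
  have "card (Side r j - S) = card (Side r j) - card (Side r j \<inter> S)"
    by (rule card_Diff_subset_Int) simp
  moreover have "card (Side r j \<inter> S) \<le> card (Side r j)" by (rule card_mono) auto
  ultimately show ?thesis by simp
qed

lemma min_card:
  assumes m: "minimal_skew_forcing_set (H_vertices r) (H_edge r) S"
  shows "card S \<le> r + 1"
proof (rule ccontr)
  assume big: "\<not> card S \<le> r + 1"
  from m have f: "skew_forcing_set (H_vertices r) (H_edge r) S"
    and nomin: "\<forall>T. T \<subset> S \<longrightarrow> \<not> skew_forcing_set (H_vertices r) (H_edge r) T"
    unfolding minimal_skew_forcing_set_def by auto
  then have sub: "S \<subseteq> H_vertices r" and c: "cond r S" using forcing_iff by auto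
  have cw: "card (H_vertices r - S) \<le> r + 2" using card_S_V[OF sub] big by linarith
  obtain i where i: "i \<le> 1" "condi r S i" using c unfolding cond_def by auto
  define j where "j = 1 - i"
  have ij: "1 - i = j" "j \<le> 1" "i \<noteq> j" unfolding j_def using i by arith+
  have cw2: "card (Side r i - S) + card (Side r j - S) \<le> r + 2"
    using card_W_i[OF i(1), of r S] cw ij by simp
  have key: "\<exists>v\<in>S. condi r (S - {v}) i"
  proof (cases "card (Side r i - S) = 0")
    case True
    then have Si: "Side r i \<subseteq> S" by simp
    have vi: "(i,0) \<in> Side r i" by (simp add: Side_def)
    then have "Side r i - (S - {(i,0)}) = {(i,0)}" using Si by auto
    then have "condi r (S - {(i,0)}) i" unfolding condi_def by simp
    then show ?thesis using vi Si by blast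
  next
    case False
    have cI: "card (Side r j \<inter> S) = r + 2 - card (Side r j - S)" by (rule card_Side_Int)
    have same: "Side r i - (S - {v}) = Side r i - S" if "v \<in> Side r j" for v
      using not_Side_other[OF that ij(3)] by auto
    show ?thesis
    proof (cases "card (Side r i - S) \<le> 1")
      case True
      have "card (Side r j \<inter> S) \<ge> 1" using cI cw2 False by linarith
      then obtain v where v: "v \<in> Side r j \<inter> S" by (metis card.empty ex_in_conv not_one_le_zero)
      have eqv: "Side r i - (S - {v}) = Side r i - S" using same v by blast
      have "condi r (S - {v}) i" unfolding condi_def eqv using v True by auto
      then show ?thesis using v by blast
    next
      case False
      then obtain x where c2: "card (Side r i - S) = 2" and x: "x \<in> Side r i - S"
        and xp: "r \<le> snd x \<or> (j, snd x) \<in> S"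
        using i(2) ij unfolding condi_def by auto
      have "card (Side r j \<inter> S) \<ge> 2" using cI cw2 c2 by linarith
      have "\<not> (Side r j \<inter> S \<subseteq> {(j, snd x)})"
      proof
        assume "Side r j \<inter> S \<subseteq> {(j, snd x)}"
        then have "card (Side r j \<inter> S) \<le> 1" using card_mono[of "{(j, snd x)}"] by fastforce
        then show False using \<open>card (Side r j \<inter> S) \<ge> 2\<close> by simp
      qed
      then obtain v where v: "v \<in> Side r j \<inter> S" "v \<noteq> (j, snd x)" by blast
      have eqv: "Side r i - (S - {v}) = Side r i - S" using same v by blast
      have "condi r (S - {v}) i" unfolding condi_def eqv using v c2 x xp ij by auto
      then show ?thesis using v by blast
    qed
  qed
  then obtain v where v: "v \<in> S" "condi r (S - {v}) i" by blast
  have "cond r (S - {v})" using v(2) i(1) unfolding cond_def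
    by (metis le_antisym less_one not_le)
  then have "skew_forcing_set (H_vertices r) (H_edge r) (S - {v})" using forcing_iff sub by blast
  moreover have "S - {v} \<subset> S" using v by auto
  ultimately show False using nomin by blast
qed

lemma Zbar: assumes "r \<ge> 2" shows "Z_minus_bar (H_vertices r) (H_edge r) = r + 1"
  unfolding Z_minus_bar_def
proof (rule Max_eqI)
  have "{S. minimal_skew_forcing_set (H_vertices r) (H_edge r) S} \<subseteq> Pow (H_vertices r)"
    unfolding minimal_skew_forcing_set_def skew_forcing_set_def by auto
  then have "finite {S. minimal_skew_forcing_set (H_vertices r) (H_edge r) S}"
    by (rule finite_subset) simp
  then show "finite (card ` {S. minimal_skew_forcing_set (H_vertices r) (H_edge r) S})" by simp
next
  fix y assume "y \<in> card ` {S. minimal_skew_forcing_set (H_vertices r) (H_edge r) S}"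
  then show "y \<le> r + 1" using min_card by auto
next
  show "r + 1 \<in> card ` {S. minimal_skew_forcing_set (H_vertices r) (H_edge r) S}"
  proof (rule rev_image_eqI)
    show "SX r \<in> {S. minimal_skew_forcing_set (H_vertices r) (H_edge r) S}" using SX_min(1)[OF assms] by simp
    show "r + 1 = card (SX r)" using SX_min(2)[OF assms] by simp
  qed
qed

abbreviation RR :: "nat \<Rightarrow> nat \<Rightarrow> (nat \<times> nat) set \<Rightarrow> (nat \<times> nat) set \<Rightarrow> bool" where
  "RR r k \<equiv> (skew_TAR_adj (H_vertices r) (H_edge r) k)\<^sup>*\<^sup>*"

lemma adj_sym: "skew_TAR_adj V E k S1 S2 \<Longrightarrow> skew_TAR_adj V E k S2 S1"
  unfolding skew_TAR_adj_def sym_diff_def by (simp add: Un_commute)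

lemma rt_sym: "(skew_TAR_adj V E k)\<^sup>*\<^sup>* a b \<Longrightarrow> (skew_TAR_adj V E k)\<^sup>*\<^sup>* b a"
proof (induction rule: rtranclp_induct)
  case base then show ?case by simp
next
  case (step y z)
  then show ?case using adj_sym[OF step(2)] by (simp add: converse_rtranclp_into_rtranclp)
qed

lemma conn_sub:
  assumes "S1 \<subseteq> S2" "skew_forcing_set (H_vertices r) (H_edge r) S1" "S2 \<subseteq> H_vertices r" "card S2 \<le> k"
  shows "RR r k S1 S2"
proof -
  have "\<And>S1. card (S2 - S1) = n \<Longrightarrow> S1 \<subseteq> S2 \<Longrightarrow> skew_forcing_set (H_vertices r) (H_edge r) S1
        \<Longrightarrow> RR r k S1 S2" for n
  proof (induction n rule: less_induct)
    case (less n S1)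
    show ?case
    proof (cases "S1 = S2")
      case True then show ?thesis by simp
    next
      case False
      then obtain v where v: "v \<in> S2" "v \<notin> S1" using less.prems(2) by blast
      have fin2: "finite S2" by (rule finite_subset[OF assms(3) finite_V])
      have sub': "insert v S1 \<subseteq> S2" using v less.prems(2) by auto
      have f': "skew_forcing_set (H_vertices r) (H_edge r) (insert v S1)"
      proof (rule forcing_mono[OF less.prems(3)])
        show "S1 \<subseteq> insert v S1" by blast
        show "insert v S1 \<subseteq> H_vertices r" using sub' assms(3) by (rule order_trans)
      qed
      have c1: "card S1 \<le> k" using card_mono[OF fin2 less.prems(2)] assms(4) by simp
      have c1': "card (insert v S1) \<le> k" using card_mono[OF fin2 sub'] assms(4) by simp
      have sd: "sym_diff S1 (insert v S1) = {v}" unfolding sym_diff_def using v by auto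
      have adj: "skew_TAR_adj (H_vertices r) (H_edge r) k S1 (insert v S1)"
        unfolding skew_TAR_adj_def skew_TAR_vertices_def sd using less.prems(3) f' c1 c1' by simp
      have eqd: "S2 - insert v S1 = (S2 - S1) - {v}" by blast
      have "card ((S2 - S1) - {v}) < card (S2 - S1)"
        by (rule card_Diff1_less) (use fin2 v in auto)
      then have lt: "card (S2 - insert v S1) < n" using less.prems(1) eqd by simp
      have "RR r k (insert v S1) S2" by (rule less.IH[OF lt refl sub' f'])
      then show ?thesis using adj by (simp add: converse_rtranclp_into_rtranclp)
    qed
  qed
  then show ?thesis using assms by blast
qed

lemma Side_forcing: "i \<le> 1 \<Longrightarrow> skew_forcing_set (H_vertices r) (H_edge r) (Side r i)"
proof -
  assume i: "i \<le> 1"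
  have "condi r (Side r i) i" unfolding condi_def by simp
  then have "cond r (Side r i)" unfolding cond_def using i by (metis le_antisym less_one not_le)
  then show ?thesis using forcing_iff Side_sub[OF i] by blast
qed

lemma side_connect:
  assumes r: "r \<ge> 2" and k: "2*r \<le> k"
  shows "RR r k (Side r 0) (Side r 1)"
proof -
  define M where "M = TT r 0 \<union> TT r 1"
  have MV: "M \<subseteq> H_vertices r" unfolding M_def using TT_props(3)[of 0 r] TT_props(3)[of 1 r] Side_sub[of 0 r] Side_sub[of 1 r] by auto
  have fM: "skew_forcing_set (H_vertices r) (H_edge r) M"
    using forcing_mono[OF TT_props(1)[of 0 r]] MV unfolding M_def by auto
  have cM: "card M \<le> k" unfolding M_def using card_Un_le[of "TT r 0" "TT r 1"] TT_props(2)[of 0 r] TT_props(2)[of 1 r] k by simp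
  have cS: "card (Side r i) \<le> k" for i using r k by simp
  have 1: "RR r k (Side r 0) (TT r 0)"
    by (rule rt_sym, rule conn_sub) (use TT_props[of 0 r] Side_sub[of 0 r] cS in auto)
  have 2: "RR r k (TT r 0) M"
    by (rule conn_sub) (use TT_props[of 0 r] MV cM in \<open>auto simp: M_def\<close>)
  have 3: "RR r k M (TT r 1)"
    by (rule rt_sym, rule conn_sub) (use TT_props[of 1 r] MV cM in \<open>auto simp: M_def\<close>)
  have 4: "RR r k (TT r 1) (Side r 1)"
    by (rule conn_sub) (use TT_props[of 1 r] Side_sub[of 1 r] cS in auto)
  show ?thesis using 1 2 3 4 by (meson rtranclp_trans)
qed

lemma to_side:
  assumes r: "r \<ge> 2" and k: "2*r \<le> k"
    and f: "skew_forcing_set (H_vertices r) (H_edge r) S" and cS: "card S \<le> k"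
  shows "\<exists>i\<le>1. RR r k S (Side r i)"
proof -
  have sub: "S \<subseteq> H_vertices r" and c: "cond r S" using f forcing_iff by auto
  obtain i where i: "i \<le> 1" "condi r S i" using c unfolding cond_def by auto
  have cSi: "card (Side r i) \<le> k" using r k by simp
  have SiV: "Side r i \<subseteq> H_vertices r" by (rule Side_sub[OF i(1)])
  have condf: "skew_forcing_set (H_vertices r) (H_edge r) T" if "condi r T i" "T \<subseteq> H_vertices r" for T
  proof -
    have "cond r T" using that(1) i(1) unfolding cond_def by (metis le_antisym less_one not_le)
    then show ?thesis using forcing_iff that(2) by blast
  qed
  show ?thesis
  proof (cases "card (Side r i - S) \<le> 1")
    case True
    define S' where "S' = S \<inter> Side r i"
    have eq: "Side r i - S' = Side r i - S" unfolding S'_def by blast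
    have f': "skew_forcing_set (H_vertices r) (H_edge r) S'"
      by (rule condf) (use True eq sub in \<open>auto simp: condi_def S'_def\<close>)
    have 1: "RR r k S S'" by (rule rt_sym, rule conn_sub[OF _ f' sub cS]) (simp add: S'_def)
    have 2: "RR r k S' (Side r i)" by (rule conn_sub[OF _ f' SiV cSi]) (simp add: S'_def)
    show ?thesis using 1 2 i(1) by (meson rtranclp_trans)
  next
    case False
    then obtain x where c2: "card (Side r i - S) = 2" and x: "x \<in> Side r i - S"
      and xp: "r \<le> snd x \<or> (1 - i, snd x) \<in> S"
      using i(2) unfolding condi_def by auto
    define p where "p = (1 - i, snd x)"
    have "1 - i \<noteq> i" using i(1) by arith
    then have pnot: "p \<notin> Side r i" unfolding p_def Side_def by auto
    define S' where "S' = S \<inter> insert p (Side r i)"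
    have eq: "Side r i - S' = Side r i - S" unfolding S'_def by blast
    have ci': "condi r S' i" unfolding condi_def eq using c2 x xp unfolding S'_def p_def by auto
    have S'V: "S' \<subseteq> H_vertices r" using sub unfolding S'_def by auto
    have f': "skew_forcing_set (H_vertices r) (H_edge r) S'" by (rule condf[OF ci' S'V])
    have 1: "RR r k S S'" by (rule rt_sym, rule conn_sub[OF _ f' sub cS]) (simp add: S'_def)
    define S2 where "S2 = insert x S'"
    have xV: "x \<in> H_vertices r" using x SiV by auto
    have S2V: "S2 \<subseteq> H_vertices r" unfolding S2_def using S'V xV by auto
    have f2: "skew_forcing_set (H_vertices r) (H_edge r) S2"
      by (rule forcing_mono[OF f' _ S2V]) (auto simp: S2_def)
    have sub1: "S' \<subseteq> insert p (Side r i) - (Side r i - S)" unfolding S'_def by blast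
    have sub2: "Side r i - S \<subseteq> insert p (Side r i)" by blast
    have "card (insert p (Side r i) - (Side r i - S)) = card (insert p (Side r i)) - card (Side r i - S)"
      by (rule card_Diff_subset[OF _ sub2]) simp
    also have "\<dots> = r + 1" using pnot c2 by simp
    finally have "card S' \<le> r + 1" using card_mono[OF _ sub1] by simp
    moreover have "finite S'" by (rule finite_subset[OF S'V finite_V])
    ultimately have "card S2 \<le> r + 2" unfolding S2_def by (simp add: card_insert_if)
    then have cS2: "card S2 \<le> k" using r k by simp
    have 2: "RR r k S' S2" by (rule conn_sub[OF _ f' S2V cS2]) (auto simp: S2_def)
    define S3 where "S3 = S2 \<inter> Side r i"
    have eq3: "Side r i - S3 = (Side r i - S) - {x}" unfolding S3_def S2_def using eq by blast
    have "card (Side r i - S3) = 1" unfolding eq3 using c2 x by simp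
    then have ci3: "condi r S3 i" unfolding condi_def by simp
    have S3V: "S3 \<subseteq> H_vertices r" unfolding S3_def using SiV by auto
    have f3: "skew_forcing_set (H_vertices r) (H_edge r) S3" by (rule condf[OF ci3 S3V])
    have 3: "RR r k S2 S3" by (rule rt_sym, rule conn_sub[OF _ f3 S2V cS2]) (simp add: S3_def)
    have 4: "RR r k S3 (Side r i)" by (rule conn_sub[OF _ f3 SiV cSi]) (simp add: S3_def)
    show ?thesis using 1 2 3 4 i(1) by (meson rtranclp_trans)
  qed
qed

lemma conn_big:
  assumes r: "r \<ge> 2" and k: "2*r \<le> k"
  shows "skew_TAR_connected (H_vertices r) (H_edge r) k"
  unfolding skew_TAR_connected_def
proof (intro ballI)
  have toS0: "RR r k S (Side r 0)" if "S \<in> skew_TAR_vertices (H_vertices r) (H_edge r) k" for S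
  proof -
    from that have f: "skew_forcing_set (H_vertices r) (H_edge r) S" and c: "card S \<le> k"
      unfolding skew_TAR_vertices_def by auto
    obtain i where i: "i \<le> 1" "RR r k S (Side r i)" using to_side[OF r k f c] by blast
    have "i = 0 \<or> i = 1" using i(1) by auto
    then show ?thesis
    proof
      assume "i = 0" then show ?thesis using i(2) by simp
    next
      assume "i = 1" then show ?thesis using i(2) rt_sym[OF side_connect[OF r k]] by (meson rtranclp_trans)
    qed
  qed
  fix S1 S2 assume "S1 \<in> skew_TAR_vertices (H_vertices r) (H_edge r) k" "S2 \<in> skew_TAR_vertices (H_vertices r) (H_edge r) k"
  then show "RR r k S1 S2" using toS0 rt_sym by (meson rtranclp_trans)
qed

lemma inv_step:
  assumes r: "r \<ge> 2" and adj: "skew_TAR_adj (H_vertices r) (H_edge r) (2*r-1) S S'"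
    and P: "card (Side r 0 - S) \<le> 2"
  shows "card (Side r 0 - S') \<le> 2"
proof (rule ccontr)
  assume nP: "\<not> card (Side r 0 - S') \<le> 2"
  from adj have fS: "skew_forcing_set (H_vertices r) (H_edge r) S" and fS': "skew_forcing_set (H_vertices r) (H_edge r) S'"
    and cS: "card S \<le> 2*r-1" and sd: "card (sym_diff S S') = 1"
    unfolding skew_TAR_adj_def skew_TAR_vertices_def by auto
  obtain v where v: "sym_diff S S' = {v}" using sd by (rule card_1_singletonE)
  have agree: "x \<in> S \<longleftrightarrow> x \<in> S'" if "x \<noteq> v" for x
    using v that unfolding sym_diff_def by blast
  have subS: "S \<subseteq> H_vertices r" and c': "cond r S'" using fS fS' forcing_iff by auto
  have "\<not> condi r S' 0" using nP condi_le2 by blast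
  then have c1: "card (Side r 1 - S') \<le> 2" using c' condi_le2 unfolding cond_def by blast
  show False
  proof (cases "v \<in> Side r 1")
    case True
    then have "v \<notin> Side r 0" using not_Side_other[of v r 1 0] by simp
    have "Side r 0 - S = Side r 0 - S'"
    proof (rule set_eqI)
      fix x show "x \<in> Side r 0 - S \<longleftrightarrow> x \<in> Side r 0 - S'"
        using agree[of x] \<open>v \<notin> Side r 0\<close> by (cases "x = v") auto
    qed
    then show False using P nP by simp
  next
    case False
    have "Side r 1 - S = Side r 1 - S'"
    proof (rule set_eqI)
      fix x show "x \<in> Side r 1 - S \<longleftrightarrow> x \<in> Side r 1 - S'"
        using agree[of x] False by (cases "x = v") auto
    qed
    then have "card (H_vertices r - S) \<le> 4" using card_W[of r S] P c1 by simp
    moreover have "card S + card (H_vertices r - S) = 2*r+4" by (rule card_S_V[OF subS])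
    ultimately show False using cS r by linarith
  qed
qed

lemma disc:
  assumes r: "r \<ge> 2"
  shows "\<not> skew_TAR_connected (H_vertices r) (H_edge r) (2*r-1)"
proof
  assume conn: "skew_TAR_connected (H_vertices r) (H_edge r) (2*r-1)"
  have inV: "TT r i \<in> skew_TAR_vertices (H_vertices r) (H_edge r) (2*r-1)" if "i \<le> 1" for i
    unfolding skew_TAR_vertices_def using TT_props[OF that, of r] r by simp
  have R: "RR r (2*r-1) (TT r 0) (TT r 1)" using conn inV[of 0] inV[of 1] unfolding skew_TAR_connected_def by simp
  have "card (Side r 0 - T) \<le> 2" if "RR r (2*r-1) (TT r 0) T" for T
    using that
  proof (induction rule: rtranclp_induct)
    case base then show ?case using TT_props(4)[of 0 r] by simp
  next
    case (step y z) then show ?case using inv_step[OF r] by blast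
  qed
  from this[OF R] have "card (Side r 0 - TT r 1) \<le> 2" .
  moreover have "Side r 0 - TT r 1 = Side r 0" using TT_props(3)[of 1 r] Side_disj by auto
  ultimately show False using r by simp
qed

lemma z0: assumes r: "r \<ge> 2" shows "z_minus_0 (H_vertices r) (H_edge r) = 2 * r"
  unfolding z_minus_0_def
proof (rule Least_equality)
  show "\<forall>k\<ge>2 * r. skew_TAR_connected (H_vertices r) (H_edge r) k" using conn_big[OF r] by blast
next
  fix y assume y: "\<forall>k\<ge>y. skew_TAR_connected (H_vertices r) (H_edge r) k"
  show "2 * r \<le> y"
  proof (rule ccontr)
    assume "\<not> 2 * r \<le> y"
    then have "2*r - 1 \<ge> y" by simp
    then show False using y disc[OF r] by blast
  qed
qed

theorem proposition5p8:
  fixes r :: nat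
  assumes "r \<ge> 2"
  shows "Z_minus (H_vertices r) (H_edge r) = r
       \<and> Z_minus_bar (H_vertices r) (H_edge r) = r + 1
       \<and> z_minus_0 (H_vertices r) (H_edge r) = 2 * r
       \<and> 2 * r = Z_minus_bar (H_vertices r) (H_edge r) + r - 1"
  using Zminus[of r] Zbar[OF assms] z0[OF assms] by simp

end
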